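(* There exists a $[7,3]_2$ MWS code, and there exists a $[32,3]_3$ MWS code.
   Context: An $[n,k]_q$ code is a $k$-dimensional subspace of $\mathbb{F}_q^n$, non-degenerate (no coordinate identically zero on the code). It is a maximum weight spectrum (MWS) code if the set of its non-zero Hamming weights has cardinality $\frac{q^k-1}{q-1}$ (so $7$ for $q=2,k=3$ and $13$ for $q=3,k=3$). *)

theory Defs
  imports "HOL-Analysis.Analysis"
begin

text \<open>Vectors of length n over a field 'a are modelled as 'a^'n, with CARD('n) = n.
  The field F_q is modelled by an arbitrary finite field type 'a with CARD('a) = q.\<close>

definition hamming_wt :: "('a::zero)^('n::finite) \<Rightarrow> nat" where
  "hamming_wt x = card {i. x $ i \<noteq> 0}"

text \<open>An [n,k]_q code: a k-dimensional subspace of F_q^n, non-degenerate.\<close>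
definition is_code :: "nat \<Rightarrow> (('a::{field,finite})^('n::finite)) set \<Rightarrow> bool" where
  "is_code k C \<longleftrightarrow> vec.subspace C \<and> vec.dim C = k \<and> (\<forall>i. \<exists>c\<in>C. c $ i \<noteq> 0)"

text \<open>Maximum weight spectrum: number of distinct nonzero weights equals (q^k-1)/(q-1).\<close>
definition is_MWS_code :: "nat \<Rightarrow> (('a::{field,finite})^('n::finite)) set \<Rightarrow> bool" where
  "is_MWS_code k C \<longleftrightarrow> is_code k C \<and>
     card (hamming_wt ` (C - {0})) = (CARD('a) ^ k - 1) div (CARD('a) - 1)"

end

theory Submission
  imports Defs
begin

definition E3 :: "int \<times> int \<times> int \<Rightarrow> int \<times> int \<times> int \<Rightarrow> int" where
  "E3 t c = fst t * fst c + fst (snd t) * fst (snd c) + snd (snd t) * snd (snd c)"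

definition Wt :: "int \<Rightarrow> (int \<times> int \<times> int) list \<Rightarrow> int \<times> int \<times> int \<Rightarrow> nat" where
  "Wt p cols t = length (filter (\<lambda>c. \<not> p dvd E3 t c) cols)"

definition Tr :: "int \<Rightarrow> (int \<times> int \<times> int) set" where
  "Tr p = set [(a,b,c). a <- [0..p-1], b <- [0..p-1], c <- [0..p-1]]"

lemma Tr_mem: "(a,b,c) \<in> Tr p \<longleftrightarrow> a \<in> {0..p-1} \<and> b \<in> {0..p-1} \<and> c \<in> {0..p-1}"
  unfolding Tr_def by (auto simp: image_iff)

lemma generic:
  fixes p :: int and cols :: "(int \<times> int \<times> int) list"
  assumes card_n: "CARD('n::finite) = length cols"
    and char: "\<And>m. (of_int m :: 'a::{field,finite}) = 0 \<longleftrightarrow> p dvd m"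
    and surj: "\<And>x::'a. \<exists>r\<in>{0..p-1}. x = of_int r"
    and p1: "p > 1"
    and nz: "\<forall>t\<in>Tr p - {(0,0,0)}. Wt p cols t > 0"
    and nd: "\<forall>c\<in>set cols. \<not> (p dvd fst c \<and> p dvd fst (snd c) \<and> p dvd snd (snd c))"
  shows "\<exists>C :: ('a^'n) set. is_code 3 C \<and> card (hamming_wt ` (C - {0})) = card (Wt p cols ` (Tr p - {(0,0,0)}))"
proof -
  let ?n = "length cols"
  obtain h where h: "bij_betw h {0..<?n} (UNIV::'n set)"
    using ex_bij_betw_nat_finite[of "UNIV::'n set"] card_n by auto
  define ix where "ix = inv_into {0..<?n} h"
  have ix: "bij_betw ix UNIV {0..<?n}" unfolding ix_def by (rule bij_betw_inv_into[OF h])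
  have ixl: "ix i < ?n" for i using ix by (auto simp: bij_betw_def)
  define phi :: "int \<times> int \<times> int \<Rightarrow> 'a^'n" where
    "phi t = (\<chi> i. of_int (E3 t (cols ! ix i)))" for t
  define g1 where "g1 = phi (1,0,0)"
  define g2 where "g2 = phi (0,1,0)"
  define g3 where "g3 = phi (0,0,1)"
  have phi_lin: "phi (a,b,c) = of_int a *s g1 + of_int b *s g2 + of_int c *s g3" for a b c
    unfolding g1_def g2_def g3_def phi_def by (simp add: vec_eq_iff E3_def)
  have wt: "hamming_wt (phi t) = Wt p cols t" for t
  proof -
    have "{i. phi t $ i \<noteq> 0} = {i. \<not> p dvd E3 t (cols ! ix i)}"
      by (simp add: phi_def char)
    moreover have "bij_betw ix {i. \<not> p dvd E3 t (cols ! ix i)} {k\<in>{0..<?n}. \<not> p dvd E3 t (cols ! k)}"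
    proof (rule bij_betw_subset[OF ix])
      have r: "range ix = {0..<?n}" using ix by (simp add: bij_betw_def)
      show "ix ` {i. \<not> p dvd E3 t (cols ! ix i)} = {k\<in>{0..<?n}. \<not> p dvd E3 t (cols ! k)}"
      proof
        show "ix ` {i. \<not> p dvd E3 t (cols ! ix i)} \<subseteq> {k\<in>{0..<?n}. \<not> p dvd E3 t (cols ! k)}"
          using ixl by auto
        show "{k\<in>{0..<?n}. \<not> p dvd E3 t (cols ! k)} \<subseteq> ix ` {i. \<not> p dvd E3 t (cols ! ix i)}"
        proof
          fix k assume k: "k \<in> {k\<in>{0..<?n}. \<not> p dvd E3 t (cols ! k)}"
          then obtain i where "k = ix i" using r by (metis (no_types, lifting) imageE mem_Collect_eq)
          then show "k \<in> ix ` {i. \<not> p dvd E3 t (cols ! ix i)}" using k by auto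
        qed
      qed
    qed simp
    ultimately show ?thesis unfolding hamming_wt_def Wt_def
      by (simp add: bij_betw_same_card length_filter_conv_card)
  qed
  have of_int_cases: "\<exists>r\<in>{0..p-1}. x = of_int r" for x :: 'a using surj by blast
  have phi0: "phi (a,b,c) = 0 \<Longrightarrow> (a,b,c) \<in> Tr p \<Longrightarrow> (a,b,c) = (0,0,0)" for a b c
  proof (rule ccontr)
    assume "phi (a,b,c) = 0" "(a,b,c) \<in> Tr p" "(a,b,c) \<noteq> (0,0,0)"
    then have "Wt p cols (a,b,c) > 0" using nz by blast
    moreover have "hamming_wt (phi (a,b,c)) = 0" using \<open>phi (a,b,c) = 0\<close> by (simp add: hamming_wt_def)
    ultimately show False using wt[of "(a,b,c)"] by simp
  qed
  have indep3: "a *s g1 + b *s g2 + c *s g3 = 0 \<Longrightarrow> a = 0 \<and> b = 0 \<and> c = 0" for a b c :: 'a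
  proof -
    assume z: "a *s g1 + b *s g2 + c *s g3 = 0"
    obtain ra where ra: "ra \<in> {0..p-1}" "a = of_int ra" using surj by blast
    obtain rb where rb: "rb \<in> {0..p-1}" "b = of_int rb" using surj by blast
    obtain rc where rc: "rc \<in> {0..p-1}" "c = of_int rc" using surj by blast
    have "phi (ra,rb,rc) = 0" using z ra rb rc phi_lin by simp
    then have "(ra,rb,rc) = (0,0,0)" using phi0 ra rb rc Tr_mem by blast
    then show ?thesis using ra rb rc by simp
  qed
  have one: "(1::'a) \<noteq> 0" by simp
  have d12: "g1 \<noteq> g2" using indep3[of 1 "-1" 0] by auto
  have d13: "g1 \<noteq> g3" using indep3[of 1 0 "-1"] by auto
  have d23: "g2 \<noteq> g3" using indep3[of 0 1 "-1"] by auto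
  define C where "C = vec.span {g1, g2, g3}"
  have ind: "vec.independent {g1,g2,g3}"
  proof
    assume "vec.dependent {g1,g2,g3}"
    then obtain u where u: "\<exists>v\<in>{g1,g2,g3}. u v \<noteq> 0" "(\<Sum>v\<in>{g1,g2,g3}. u v *s v) = 0"
      using vec.dependent_finite[of "{g1,g2,g3}"] by auto
    then have "u g1 *s g1 + u g2 *s g2 + u g3 *s g3 = 0" using d12 d13 d23 by (simp add: add.assoc)
    then show False using indep3 u(1) by blast
  qed
  have dim: "vec.dim C = 3" unfolding C_def using vec.dim_span_eq_card_independent[OF ind] d12 d13 d23 by simp
  have spanC: "C = phi ` Tr p"
  proof
    show "C \<subseteq> phi ` Tr p"
    proof
      fix x assume "x \<in> C"
      then obtain k1 k2 k3 where "x - k1 *s g1 - k2 *s g2 - k3 *s g3 = 0"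
        unfolding C_def vec.span_insert by auto
      then have x: "x = k1 *s g1 + k2 *s g2 + k3 *s g3" by (simp add: algebra_simps)
      obtain ra where ra: "ra \<in> {0..p-1}" "k1 = of_int ra" using surj by blast
      obtain rb where rb: "rb \<in> {0..p-1}" "k2 = of_int rb" using surj by blast
      obtain rc where rc: "rc \<in> {0..p-1}" "k3 = of_int rc" using surj by blast
      have "x = phi (ra,rb,rc)" using x ra rb rc phi_lin by simp
      moreover have "(ra,rb,rc) \<in> Tr p" using ra rb rc Tr_mem by blast
      ultimately show "x \<in> phi ` Tr p" by blast
    qed
    show "phi ` Tr p \<subseteq> C"
    proof
      fix x assume "x \<in> phi ` Tr p"
      then obtain a b c where "x = phi (a,b,c)" by auto
      then have x: "x = of_int a *s g1 + of_int b *s g2 + of_int c *s g3" using phi_lin by simp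
      show "x \<in> C" unfolding x C_def
        by (intro vec.span_add vec.span_scale vec.span_base) auto
    qed
  qed
  have phiz: "phi (0,0,0) = 0" by (simp add: phi_def vec_eq_iff E3_def)
  have z0: "(0,0,0) \<in> Tr p" using Tr_mem p1 by auto
  have Cm0: "C - {0} = phi ` (Tr p - {(0,0,0)})"
    unfolding spanC
  proof
    show "phi ` Tr p - {0} \<subseteq> phi ` (Tr p - {(0, 0, 0)})"
    proof
      fix x assume "x \<in> phi ` Tr p - {0}"
      then obtain t where t: "t \<in> Tr p" "x = phi t" "x \<noteq> 0" by auto
      then have "t \<noteq> (0,0,0)" using phiz by auto
      then show "x \<in> phi ` (Tr p - {(0, 0, 0)})" using t by auto
    qed
    show "phi ` (Tr p - {(0, 0, 0)}) \<subseteq> phi ` Tr p - {0}"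
    proof
      fix x assume "x \<in> phi ` (Tr p - {(0, 0, 0)})"
      then obtain a b c where t: "(a,b,c) \<in> Tr p" "x = phi (a,b,c)" "(a,b,c) \<noteq> (0,0,0)" by auto
      then show "x \<in> phi ` Tr p - {0}" using phi0[of a b c] by auto
    qed
  qed
  have nondeg: "\<forall>i. \<exists>c\<in>C. c $ i \<noteq> 0"
  proof
    fix i
    have "cols ! ix i \<in> set cols" using ixl by simp
    then have nd': "\<not> (p dvd fst (cols ! ix i) \<and> p dvd fst (snd (cols ! ix i)) \<and> p dvd snd (snd (cols ! ix i)))"
      using nd by blast
    have t: "(1,0,0) \<in> Tr p" "(0,1,0) \<in> Tr p" "(0,0,1) \<in> Tr p" using Tr_mem p1 by auto
    show "\<exists>c\<in>C. c $ i \<noteq> 0"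
    proof (cases "p dvd fst (cols ! ix i)")
      case False
      moreover have "phi (1,0,0) \<in> C" using t spanC by blast
        ultimately show ?thesis by (intro bexI[of _ "phi (1,0,0)"]) (simp_all add: phi_def char E3_def)
    next
      case T1: True
      show ?thesis
      proof (cases "p dvd fst (snd (cols ! ix i))")
        case False
        moreover have "phi (0,1,0) \<in> C" using t spanC by blast
        ultimately show ?thesis by (intro bexI[of _ "phi (0,1,0)"]) (simp_all add: phi_def char E3_def)
      next
        case True
        then have "\<not> p dvd snd (snd (cols ! ix i))" using nd' T1 by blast
        moreover have "phi (0,0,1) \<in> C" using t spanC by blast
        ultimately show ?thesis by (intro bexI[of _ "phi (0,0,1)"]) (simp_all add: phi_def char E3_def)
      qed
    qed
  qed
  have "hamming_wt ` (C - {0}) = Wt p cols ` (Tr p - {(0,0,0)})"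
    unfolding Cm0 image_image wt by simp
  then show ?thesis using dim nondeg unfolding is_code_def C_def by (intro exI[of _ C]) (auto simp: C_def)
qed


definition "cols2 = replicate 4 ((0::int),(0::int),(1::int)) @ replicate 2 (0,1,0) @ [(1,0,0)]"
definition "cols3 = replicate 2 ((0::int),(0::int),(1::int)) @ [(0,1,1)] @ replicate 4 (1,0,0) @ replicate 3 (1,1,1)
  @ replicate 7 (1,1,2) @ [(1,2,0)] @ replicate 7 (1,2,1) @ replicate 7 (1,2,2)"

lemma of_int_mod:
  assumes "(of_int p :: 'a::ring_1) = 0"
  shows "(of_int m :: 'a) = of_int (m mod p)"
proof -
  have "m = p * (m div p) + m mod p" by simp
  then have "(of_int m :: 'a) = of_int p * of_int (m div p) + of_int (m mod p)"
    by (metis of_int_add of_int_mult)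
  then show ?thesis using assms by simp
qed

lemma field2:
  assumes "CARD('a::{field,finite}) = 2"
  shows "\<And>m. (of_int m :: 'a) = 0 \<longleftrightarrow> 2 dvd m" and "\<And>x::'a. \<exists>r\<in>{0..2-1}. x = of_int r"
proof -
  have U: "(UNIV::'a set) = {0,1}"
    by (rule card_subset_eq[symmetric]) (use assms in auto)
  have "(1::'a) + 1 \<in> {0,1}" using U by blast
  moreover have "(1::'a) + 1 \<noteq> 1" by (metis add_cancel_right_right one_neq_zero)
  ultimately have two: "(1::'a) + 1 = 0" by blast
  then have o2: "(of_int 2 :: 'a) = 0" by (metis of_int_1 of_int_add one_add_one)
  show "(of_int m :: 'a) = 0 \<longleftrightarrow> 2 dvd m" for m
  proof -
    have "m mod 2 = 0 \<or> m mod 2 = 1" by auto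
    then show ?thesis using of_int_mod[OF o2, of m] by (auto simp: dvd_eq_mod_eq_0)
  qed
  show "\<exists>r\<in>{0..2-1}. x = of_int r" for x :: 'a
  proof -
    have "x = 0 \<or> x = 1" using U by blast
    moreover have "(0::int) \<in> {0..2-1}" "(1::int) \<in> {0..2-1}" by auto
    ultimately show ?thesis by (metis of_int_0 of_int_1)
  qed
qed

lemma field3:
  assumes "CARD('a::{field,finite}) = 3"
  shows "\<And>m. (of_int m :: 'a) = 0 \<longleftrightarrow> 3 dvd m" and "\<And>x::'a. \<exists>r\<in>{0..3-1}. x = of_int r"
proof -
  have "card {0,(1::'a)} = 2" by simp
  have "{0,(1::'a)} \<noteq> UNIV"
  proof
    assume "{0,(1::'a)} = UNIV" then have "CARD('a) = 2" by (metis card_2_iff zero_neq_one)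
    then show False using assms by simp
  qed
  then obtain x :: 'a where x: "x \<noteq> 0" "x \<noteq> 1" by blast
  have "card {0,1,x} = 3" using x by simp
  then have U: "(UNIV::'a set) = {0,1,x}"
    by (intro card_subset_eq[symmetric]) (use assms in auto)
  have "x + 1 \<in> {0,1,x}" using U by blast
  then have "x + 1 = 0" using x by auto
  then have xm: "x = -1" by (simp add: eq_neg_iff_add_eq_0)
  have "(1::'a) + 1 \<in> {0,1,x}" using U by blast
  moreover have "(1::'a) + 1 \<noteq> 0"
  proof
    assume "(1::'a) + 1 = 0" then have "(1::'a) = -1" by (simp add: eq_neg_iff_add_eq_0)
    then show False using x xm by simp
  qed
  moreover have "(1::'a) + 1 \<noteq> 1" by (metis add_cancel_right_right one_neq_zero)
  ultimately have two: "(1::'a) + 1 = -1" using xm by blast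
  have o3: "(of_int 3 :: 'a) = 0"
  proof -
    have "(of_int 3 :: 'a) = (1 + 1) + 1" by simp
    then show ?thesis using two by simp
  qed
  show "(of_int m :: 'a) = 0 \<longleftrightarrow> 3 dvd m" for m
  proof -
    have "m mod 3 = 0 \<or> m mod 3 = 1 \<or> m mod 3 = 2" by auto
    moreover have "(of_int 2 :: 'a) \<noteq> 0"
    proof
      assume "(of_int 2 :: 'a) = 0"
      then have "(1::'a) + 1 = 0" by simp
      then have "(-1::'a) = 0" using two by simp
      then show False by simp
    qed
    ultimately show ?thesis using of_int_mod[OF o3, of m] by (auto simp: dvd_eq_mod_eq_0)
  qed
  show "\<exists>r\<in>{0..3-1}. y = of_int r" for y :: 'a
  proof -
    have "y \<in> {0,1,x}" using U by blast
    then consider "y = 0" | "y = 1" | "y = 1 + 1" using two xm by auto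
    then show ?thesis
    proof cases
      case 1 then show ?thesis by (intro bexI[of _ 0]) auto
    next
      case 2 then show ?thesis by (intro bexI[of _ 1]) auto
    next
      case 3 then show ?thesis by (intro bexI[of _ 2]) auto
    qed
  qed
qed

theorem mainTheorem13:
  assumes "CARD('a::{field,finite}) = 2" and "CARD('b::{field,finite}) = 3"
  shows "(\<exists>C :: ('a^7) set. is_MWS_code 3 C) \<and> (\<exists>D :: ('b^32) set. is_MWS_code 3 D)"
proof
  have c1: "\<forall>t\<in>Tr 2 - {(0,0,0)}. Wt 2 cols2 t > 0" by code_simp
  have c2: "card (Wt 2 cols2 ` (Tr 2 - {(0,0,0)})) = 7" by code_simp
  have c3: "\<forall>c\<in>set cols2. \<not> (2 dvd fst c \<and> 2 dvd fst (snd c) \<and> 2 dvd snd (snd c))" by code_simp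
  have l: "CARD(7) = length cols2" by (simp add: cols2_def)
  obtain C :: "('a^7) set" where C: "is_code 3 C" "card (hamming_wt ` (C - {0})) = 7"
    using generic[OF l field2(1)[OF assms(1)] field2(2)[OF assms(1)] _ c1 c3] c2 by auto
  show "\<exists>C :: ('a^7) set. is_MWS_code 3 C"
    using C assms(1) by (intro exI[of _ C]) (simp add: is_MWS_code_def)
next
  have c1: "\<forall>t\<in>Tr 3 - {(0,0,0)}. Wt 3 cols3 t > 0" by code_simp
  have c2: "card (Wt 3 cols3 ` (Tr 3 - {(0,0,0)})) = 13" by code_simp
  have c3: "\<forall>c\<in>set cols3. \<not> (3 dvd fst c \<and> 3 dvd fst (snd c) \<and> 3 dvd snd (snd c))" by code_simp
  have l: "CARD(32) = length cols3" by (simp add: cols3_def)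
  obtain C :: "('b^32) set" where C: "is_code 3 C" "card (hamming_wt ` (C - {0})) = 13"
    using generic[OF l field3(1)[OF assms(2)] field3(2)[OF assms(2)] _ c1 c3] c2 by auto
  show "\<exists>C :: ('b^32) set. is_MWS_code 3 C"
    using C assms(2) by (intro exI[of _ C]) (simp add: is_MWS_code_def)
qed

end
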